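(* Let $\Bbbk$ be a field of characteristic zero and $M$ a generalized Coxeter matrix. Then $NC(M)$ is not a bialgebra: there do not exist algebra homomorphisms $\Delta : NC(M) \to NC(M) \otimes NC(M)$ and $\varepsilon : NC(M) \to \Bbbk$ with $(\mathrm{id} \otimes \varepsilon)\circ \Delta = \mathrm{id} = (\varepsilon \otimes \mathrm{id}) \circ \Delta$.
   Context: A generalized Coxeter matrix is a symmetric matrix $M = (m_{ij})_{i,j \in I}$ with $I$ finite, $m_{ij} \in \{2,3,\dots\} \cup \{\infty\}$ for $i \neq j$, and $m_{ii} \in \{2,3,\dots\}$ (finite) for all $i$. For a commutative unital ring $\Bbbk$, the generalized nil-Coxeter algebra is $NC(M) := \Bbbk\langle T_i : i \in I\rangle / (\text{braid relations } \underbrace{T_iT_jT_i\cdots}_{m_{ij}} = \underbrace{T_jT_iT_j\cdots}_{m_{ij}} \text{ for } i\neq j,\ m_{ij}<\infty;\ T_i^{m_{ii}} = 0 \ \forall i)$. *)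

theory Defs
  imports Main "HOL-Library.Extended_Nat" "HOL-Library.Function_Algebras"
begin

definition gen_coxeter :: "('i \<Rightarrow> 'i \<Rightarrow> enat) \<Rightarrow> bool" where
  "gen_coxeter M \<longleftrightarrow> (\<forall>i j. M i j = M j i) \<and> (\<forall>i j. M i j \<ge> 2) \<and> (\<forall>i. M i i \<noteq> \<infinity>)"

text \<open>Free algebra k<T_i : i in I>: finitely supported functions on words.\<close>
definition ncpoly :: "('i list \<Rightarrow> 'k::field) set" where
  "ncpoly = {f. finite {w. f w \<noteq> 0}}"

definition ncmon :: "'i list \<Rightarrow> 'i list \<Rightarrow> 'k::field" where
  "ncmon w = (\<lambda>u. if u = w then 1 else 0)"

definition ncone :: "'i list \<Rightarrow> 'k::field" where
  "ncone = ncmon []"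

definition ncmul :: "('i list \<Rightarrow> 'k::field) \<Rightarrow> ('i list \<Rightarrow> 'k) \<Rightarrow> 'i list \<Rightarrow> 'k" where
  "ncmul f g = (\<lambda>w. \<Sum>n\<le>length w. f (take n w) * g (drop n w))"

definition ncsmult :: "'k::field \<Rightarrow> ('a \<Rightarrow> 'k) \<Rightarrow> 'a \<Rightarrow> 'k" where
  "ncsmult c f = (\<lambda>w. c * f w)"

definition alt_word :: "'i \<Rightarrow> 'i \<Rightarrow> nat \<Rightarrow> 'i list" where
  "alt_word i j m = map (\<lambda>k. if even k then i else j) [0..<m]"

definition nc_rels :: "('i \<Rightarrow> 'i \<Rightarrow> enat) \<Rightarrow> ('i list \<Rightarrow> 'k::field) set" where
  "nc_rels M =
     {ncmon (alt_word i j m) - ncmon (alt_word j i m) | i j m. i \<noteq> j \<and> M i j = enat m}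
   \<union> {ncmon (replicate m i) | i m. M i i = enat m}"

inductive_set nc_ideal :: "('i list \<Rightarrow> 'k::field) set \<Rightarrow> ('i list \<Rightarrow> 'k) set"
  for R where
  zero: "0 \<in> nc_ideal R"
| gen: "r \<in> R \<Longrightarrow> a \<in> ncpoly \<Longrightarrow> b \<in> ncpoly \<Longrightarrow> ncmul (ncmul a r) b \<in> nc_ideal R"
| add: "x \<in> nc_ideal R \<Longrightarrow> y \<in> nc_ideal R \<Longrightarrow> x + y \<in> nc_ideal R"
| smult: "x \<in> nc_ideal R \<Longrightarrow> ncsmult c x \<in> nc_ideal R"

text \<open>The tensor square F \<otimes> F of the free algebra: finitely supported functions on pairs
  of words, with multiplication (u\<otimes>v)(u'\<otimes>v') = uu' \<otimes> vv'.\<close>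
definition ncpoly2 :: "('i list \<times> 'i list \<Rightarrow> 'k::field) set" where
  "ncpoly2 = {X. finite {p. X p \<noteq> 0}}"

definition tens :: "('i list \<Rightarrow> 'k::field) \<Rightarrow> ('i list \<Rightarrow> 'k) \<Rightarrow> 'i list \<times> 'i list \<Rightarrow> 'k" where
  "tens f g = (\<lambda>(u, v). f u * g v)"

definition tone :: "'i list \<times> 'i list \<Rightarrow> 'k::field" where
  "tone = tens ncone ncone"

definition tmul :: "('i list \<times> 'i list \<Rightarrow> 'k::field) \<Rightarrow> ('i list \<times> 'i list \<Rightarrow> 'k)
                     \<Rightarrow> 'i list \<times> 'i list \<Rightarrow> 'k" where
  "tmul X Y = (\<lambda>(u, v). \<Sum>n\<le>length u. \<Sum>m\<le>length v.
        X (take n u, take m v) * Y (drop n u, drop m v))"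

text \<open>The kernel J \<otimes> F + F \<otimes> J of F \<otimes> F \<rightarrow> NC(M) \<otimes> NC(M).\<close>
inductive_set tens_ker :: "('i list \<Rightarrow> 'k::field) set \<Rightarrow> ('i list \<times> 'i list \<Rightarrow> 'k) set"
  for J where
  zero: "0 \<in> tens_ker J"
| left: "f \<in> J \<Longrightarrow> g \<in> ncpoly \<Longrightarrow> tens f g \<in> tens_ker J"
| right: "f \<in> ncpoly \<Longrightarrow> g \<in> J \<Longrightarrow> tens f g \<in> tens_ker J"
| add: "X \<in> tens_ker J \<Longrightarrow> Y \<in> tens_ker J \<Longrightarrow> X + Y \<in> tens_ker J"
| smult: "X \<in> tens_ker J \<Longrightarrow> ncsmult c X \<in> tens_ker J"

definition id_eps :: "(('i list \<Rightarrow> 'k::field) \<Rightarrow> 'k) \<Rightarrow> ('i list \<times> 'i list \<Rightarrow> 'k) \<Rightarrow> 'i list \<Rightarrow> 'k" where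
  "id_eps e X = (\<lambda>u. \<Sum>v\<in>{v. X (u, v) \<noteq> 0}. X (u, v) * e (ncmon v))"

definition eps_id :: "(('i list \<Rightarrow> 'k::field) \<Rightarrow> 'k) \<Rightarrow> ('i list \<times> 'i list \<Rightarrow> 'k) \<Rightarrow> 'i list \<Rightarrow> 'k" where
  "eps_id e X = (\<lambda>v. \<Sum>u\<in>{u. X (u, v) \<noteq> 0}. e (ncmon u) * X (u, v))"

text \<open>\<epsilon> : NC(M) \<rightarrow> k a unital algebra homomorphism, given on representatives
  (a function on F vanishing on the ideal J).\<close>
definition nc_counit_hom :: "('i \<Rightarrow> 'i \<Rightarrow> enat) \<Rightarrow> (('i list \<Rightarrow> 'k::field) \<Rightarrow> 'k) \<Rightarrow> bool" where
  "nc_counit_hom M e \<longleftrightarrow>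
     (\<forall>x\<in>nc_ideal (nc_rels M). e x = 0) \<and>
     (\<forall>x\<in>ncpoly. \<forall>y\<in>ncpoly. e (x + y) = e x + e y) \<and>
     (\<forall>x\<in>ncpoly. \<forall>c. e (ncsmult c x) = c * e x) \<and>
     (\<forall>x\<in>ncpoly. \<forall>y\<in>ncpoly. e (ncmul x y) = e x * e y) \<and>
     e ncone = 1"

text \<open>\<Delta> : NC(M) \<rightarrow> NC(M) \<otimes> NC(M) a unital algebra homomorphism, given on
  representatives: a map F \<rightarrow> F \<otimes> F that is well defined, linear, multiplicative
  and unital modulo the respective kernels.\<close>
definition nc_coprod_hom :: "('i \<Rightarrow> 'i \<Rightarrow> enat) \<Rightarrow> (('i list \<Rightarrow> 'k::field) \<Rightarrow> ('i list \<times> 'i list \<Rightarrow> 'k)) \<Rightarrow> bool" where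
  "nc_coprod_hom M D \<longleftrightarrow>
     (let J = nc_ideal (nc_rels M); K = tens_ker J in
     (\<forall>x\<in>ncpoly. D x \<in> ncpoly2) \<and>
     (\<forall>x\<in>ncpoly. \<forall>y\<in>ncpoly. x - y \<in> J \<longrightarrow> D x - D y \<in> K) \<and>
     (\<forall>x\<in>ncpoly. \<forall>y\<in>ncpoly. D (x + y) - (D x + D y) \<in> K) \<and>
     (\<forall>x\<in>ncpoly. \<forall>c. D (ncsmult c x) - ncsmult c (D x) \<in> K) \<and>
     (\<forall>x\<in>ncpoly. \<forall>y\<in>ncpoly. D (ncmul x y) - tmul (D x) (D y) \<in> K) \<and>
     D ncone - tone \<in> K)"

definition nc_counit_law :: "('i \<Rightarrow> 'i \<Rightarrow> enat) \<Rightarrow> (('i list \<Rightarrow> 'k::field) \<Rightarrow> ('i list \<times> 'i list \<Rightarrow> 'k))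
                              \<Rightarrow> (('i list \<Rightarrow> 'k) \<Rightarrow> 'k) \<Rightarrow> bool" where
  "nc_counit_law M D e \<longleftrightarrow>
     (\<forall>x\<in>ncpoly. id_eps e (D x) - x \<in> nc_ideal (nc_rels M) \<and>
                 eps_id e (D x) - x \<in> nc_ideal (nc_rels M))"

end

theory Submission
  imports Defs
begin

lemma ncmul_rep:
  "ncmul f g (replicate n x) = (\<Sum>k\<le>n. f (replicate k x) * g (replicate (n-k) x))"
  unfolding ncmul_def by (auto intro!: sum.cong simp: min_def)

lemma tmul_rep:
  "tmul X Y (replicate p x, replicate q x) =
   (\<Sum>k\<le>p. \<Sum>l\<le>q. X (replicate k x, replicate l x) * Y (replicate (p-k) x, replicate (q-l) x))"
  unfolding tmul_def by (auto intro!: sum.cong simp: min_def)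

lemma alt_word_nth: "k < m \<Longrightarrow> alt_word a b m ! k = (if even k then a else b)"
  unfolding alt_word_def by simp

lemma alt_ne_rep:
  assumes "a \<noteq> b" "2 \<le> k" shows "replicate s x \<noteq> alt_word a b k"
proof
  assume eq: "replicate s x = alt_word a b k"
  hence "length (replicate s x) = k" by (simp add: alt_word_def)
  hence s: "s = k" by simp
  have "replicate s x ! 0 = alt_word a b k ! 0" using eq by simp
  hence "x = a" using s assms by (simp add: alt_word_nth)
  moreover have "replicate s x ! 1 = alt_word a b k ! 1" using eq by simp
  hence "x = b" using s assms by (simp add: alt_word_nth)
  ultimately show False using assms by simp
qed

lemma cox_ge2: "gen_coxeter M \<Longrightarrow> M a b = enat k \<Longrightarrow> 2 \<le> k"
  unfolding gen_coxeter_def by (metis enat_ord_simps(1) numeral_eq_enat)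

lemma rel_van:
  assumes cox: "gen_coxeter M" and Mi: "M i i = enat m" and r: "r \<in> nc_rels M" and s: "s < m"
  shows "r (replicate s i) = (0::'k::field)"
proof -
  from r consider (br) a b k where "r = ncmon (alt_word a b k) - ncmon (alt_word b a k)" "a \<noteq> b" "M a b = enat k"
    | (nil) a k where "r = ncmon (replicate k a)" "M a a = enat k"
    unfolding nc_rels_def by blast
  then show ?thesis
  proof cases
    case br
    have k: "2 \<le> k" using cox_ge2[OF cox br(3)] .
    have "M b a = enat k" using br(3) cox unfolding gen_coxeter_def by metis
    have n1: "replicate s i \<noteq> alt_word a b k" using alt_ne_rep[OF br(2) k] .
    have n2: "replicate s i \<noteq> alt_word b a k" using alt_ne_rep[of b a k] br(2) k by blast
    show ?thesis using n1 n2 br(1) by (simp add: ncmon_def)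
  next
    case nil
    have k: "2 \<le> k" using cox_ge2[OF cox nil(2)] .
    show ?thesis
    proof (cases "replicate s i = replicate k a")
      case True
      hence "s = k" by (metis length_replicate)
      with True k have "a = i" by (metis Suc_1 Suc_le_lessD nth_replicate)
      with nil Mi \<open>s = k\<close> s show ?thesis by simp
    next
      case False then show ?thesis using nil by (auto simp: ncmon_def)
    qed
  qed
qed

lemma J_van:
  assumes cox: "gen_coxeter M" and Mi: "M i i = enat m"
  shows "f \<in> nc_ideal (nc_rels M) \<Longrightarrow> n < m \<Longrightarrow> f (replicate n i) = (0::'k::field)"
proof (induction arbitrary: n rule: nc_ideal.induct)
  case zero then show ?case by simp
next
  case (gen r a b)
  have "ncmul (ncmul a r) b (replicate n i)
      = (\<Sum>k\<le>n. (\<Sum>l\<le>k. a (replicate l i) * r (replicate (k-l) i)) * b (replicate (n-k) i))"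
    by (simp add: ncmul_rep)
  also have "\<dots> = 0"
    using gen by (auto intro!: sum.neutral simp: rel_van[OF cox Mi])
  finally show ?case .
next
  case (add x y) then show ?case by simp
next
  case (smult x c) then show ?case by (simp add: ncsmult_def)
qed

lemma K_van:
  assumes cox: "gen_coxeter M" and Mi: "M i i = enat m"
  shows "X \<in> tens_ker (nc_ideal (nc_rels M)) \<Longrightarrow> p < m \<Longrightarrow> q < m
    \<Longrightarrow> X (replicate p i, replicate q i) = (0::'k::field)"
proof (induction rule: tens_ker.induct)
  case zero then show ?case by simp
next
  case (left f g) then show ?case by (simp add: tens_def J_van[OF cox Mi])
next
  case (right f g) then show ?case by (simp add: tens_def J_van[OF cox Mi])
next
  case (add x y) then show ?case by simp
next
  case (smult x c) then show ?case by (simp add: ncsmult_def)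
qed

lemma tdeq: assumes "n \<le> length w" shows "(take n w = u \<and> drop n w = v) = (n = length u \<and> w = u @ v)"
proof
  assume h: "take n w = u \<and> drop n w = v"
  then have "length u = n" using assms by auto
  moreover have "w = u @ v" using h append_take_drop_id[of n w] by simp
  ultimately show "n = length u \<and> w = u @ v" by simp
next
  assume "n = length u \<and> w = u @ v"
  then show "take n w = u \<and> drop n w = v" by simp
qed
lemma ncmon_mul: "ncmul (ncmon u) (ncmon v) = (ncmon (u @ v) :: _ \<Rightarrow> 'k::field)"
proof
  fix w
  have "ncmul (ncmon u) (ncmon v) w
     = (\<Sum>n\<le>length w. if n = length u then (if w = u @ v then 1 else 0) else (0::'k))"
    unfolding ncmul_def ncmon_def
  proof (intro sum.cong refl)
    fix n assume "n \<in> {..length w}"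
    then have "n \<le> length w" by simp
    from tdeq[OF this, of u v] show "(if take n w = u then 1 else 0) * (if drop n w = v then 1 else 0) =
         (if n = length u then if w = u @ v then 1 else 0 else (0::'k))"
      by (cases "take n w = u \<and> drop n w = v") auto
  qed
  also have "\<dots> = ncmon (u @ v) w"
    by (auto simp: ncmon_def)
  finally show "ncmul (ncmon u) (ncmon v) w = (ncmon (u @ v) w :: 'k)" .
qed

lemma ncone_mul: "ncmul ncone r = (r :: _ \<Rightarrow> 'k::field)"
proof
  fix w :: "'a list"
  have "ncmul ncone r w = (\<Sum>n\<le>length w. if n = 0 then r w else (0::'k))"
    unfolding ncmul_def ncone_def ncmon_def by (intro sum.cong) auto
  then show "ncmul ncone r w = r w" by simp
qed

lemma mul_ncone: "ncmul r ncone = (r :: _ \<Rightarrow> 'k::field)"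
proof
  fix w :: "'a list"
  have "ncmul r ncone w = (\<Sum>n\<le>length w. if n = length w then r w else (0::'k))"
    unfolding ncmul_def ncone_def ncmon_def by (intro sum.cong) auto
  then show "ncmul r ncone w = r w" by simp
qed

lemma ncmon_poly: "ncmon w \<in> ncpoly"
  unfolding ncpoly_def ncmon_def by simp

lemma ncone_poly: "ncone \<in> ncpoly"
  unfolding ncone_def by (rule ncmon_poly)


lemma sum_le1: "(\<Sum>l\<le>(1::nat). f l) = f 0 + (f 1 :: 'a::comm_monoid_add)"
  by (simp add: atMost_Suc add.commute)

lemma id_eps_simp:
  assumes X: "X \<in> ncpoly2" and em: "\<And>w. e (ncmon w) = (if w = [] then 1 else (0::'k::field))"
  shows "id_eps e X u = X (u, [])"
proof -
  have fin: "finite {v. X (u, v) \<noteq> 0}"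
  proof -
    have "{v. X (u, v) \<noteq> 0} = Pair u -` {p. X p \<noteq> 0}" by auto
    moreover have "finite (Pair u -` {p. X p \<noteq> 0})"
      by (rule finite_vimageI) (use X in \<open>auto simp: ncpoly2_def inj_on_def\<close>)
    ultimately show ?thesis by simp
  qed
  have "id_eps e X u = (\<Sum>v\<in>{v. X (u, v) \<noteq> 0}. if v = [] then X (u, v) else 0)"
    unfolding id_eps_def by (intro sum.cong) (auto simp: em)
  also have "\<dots> = X (u, [])" using fin by (simp add: sum.delta)
  finally show ?thesis .
qed

lemma eps_id_simp:
  assumes X: "X \<in> ncpoly2" and em: "\<And>w. e (ncmon w) = (if w = [] then 1 else (0::'k::field))"
  shows "eps_id e X v = X ([], v)"
proof -
  have fin: "finite {u. X (u, v) \<noteq> 0}"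
  proof -
    have "{u. X (u, v) \<noteq> 0} = (\<lambda>u. (u, v)) -` {p. X p \<noteq> 0}" by auto
    moreover have "finite ((\<lambda>u. (u, v)) -` {p. X p \<noteq> 0})"
      by (rule finite_vimageI) (use X in \<open>auto simp: ncpoly2_def inj_on_def\<close>)
    ultimately show ?thesis by simp
  qed
  have "eps_id e X v = (\<Sum>u\<in>{u. X (u, v) \<noteq> 0}. if u = [] then X (u, v) else 0)"
    unfolding eps_id_def by (intro sum.cong) (auto simp: em)
  also have "\<dots> = X ([], v)" using fin by (simp add: sum.delta)
  finally show ?thesis .
qed

lemma rep_in_J:
  assumes "M a a = enat k"
  shows "ncmon (replicate k a) \<in> nc_ideal (nc_rels M)"
proof -
  have r: "ncmon (replicate k a) \<in> nc_rels M" using assms unfolding nc_rels_def by blast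
  have "ncmul (ncmul ncone (ncmon (replicate k a))) ncone \<in> nc_ideal (nc_rels M)"
    by (rule nc_ideal.gen[OF r ncone_poly ncone_poly])
  then show ?thesis by (simp add: ncone_mul mul_ncone)
qed

lemma e_mon:
  assumes cox: "gen_coxeter M" and he: "nc_counit_hom M e"
  shows "e (ncmon w) = (if w = [] then 1 else (0::'k::field))"
proof -
  have eJ: "\<And>x. x \<in> nc_ideal (nc_rels M) \<Longrightarrow> e x = 0"
    and emul: "\<And>x y. x \<in> ncpoly \<Longrightarrow> y \<in> ncpoly \<Longrightarrow> e (ncmul x y) = e x * e y"
    and e1: "e ncone = 1"
    using he unfolding nc_counit_hom_def by auto
  have pw: "e (ncmon (replicate k a)) = e (ncmon [a]) ^ k" for k a
  proof (induction k)
    case 0 then show ?case using e1 by (simp add: ncone_def)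
  next
    case (Suc k)
    have "ncmon (replicate (Suc k) a) = ncmul (ncmon [a]) (ncmon (replicate k a))"
      by (simp add: ncmon_mul)
    then have "e (ncmon (replicate (Suc k) a)) = e (ncmon [a]) * e (ncmon (replicate k a))"
      using emul[OF ncmon_poly ncmon_poly] by metis
    then show ?case using Suc by simp
  qed
  have ea: "e (ncmon [a]) = 0" for a
  proof -
    have "M a a \<noteq> \<infinity>" using cox unfolding gen_coxeter_def by blast
    then obtain k where k: "M a a = enat k" by (cases "M a a") auto
    have "e (ncmon (replicate k a)) = 0" using eJ[OF rep_in_J[of M a k, OF k]] .
    moreover have "k \<noteq> 0" using cox_ge2[OF cox k] by simp
    ultimately show ?thesis using pw by simp
  qed
  show ?thesis
  proof (cases w)
    case Nil then show ?thesis using e1 by (simp add: ncone_def)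
  next
    case (Cons a w')
    have "ncmon w = ncmul (ncmon [a]) (ncmon w')" using Cons by (simp add: ncmon_mul)
    then show ?thesis using Cons emul[OF ncmon_poly ncmon_poly] ea by (metis list.distinct(1) mult_zero_left)
  qed
qed

theorem proposition3p1:
  fixes M :: "'i::finite \<Rightarrow> 'i \<Rightarrow> enat"
  assumes "gen_coxeter M"
  shows "\<not> (\<exists>(D :: ('i list \<Rightarrow> 'k::field_char_0) \<Rightarrow> ('i list \<times> 'i list \<Rightarrow> 'k))
               (e :: ('i list \<Rightarrow> 'k) \<Rightarrow> 'k).
             nc_coprod_hom M D \<and> nc_counit_hom M e \<and> nc_counit_law M D e)"
proof
  assume "\<exists>(D :: ('i list \<Rightarrow> 'k::field_char_0) \<Rightarrow> ('i list \<times> 'i list \<Rightarrow> 'k))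
               (e :: ('i list \<Rightarrow> 'k) \<Rightarrow> 'k).
             nc_coprod_hom M D \<and> nc_counit_hom M e \<and> nc_counit_law M D e"
  then obtain D :: "('i list \<Rightarrow> 'k) \<Rightarrow> ('i list \<times> 'i list \<Rightarrow> 'k)"
    and e :: "('i list \<Rightarrow> 'k) \<Rightarrow> 'k"
    where hD: "nc_coprod_hom M D" and he: "nc_counit_hom M e" and hl: "nc_counit_law M D e"
    by blast
  define i :: 'i where "i = undefined"
  have "M i i \<noteq> \<infinity>" using assms unfolding gen_coxeter_def by blast
  then obtain m where Mi: "M i i = enat m" by (cases "M i i") auto
  have m2: "2 \<le> m" using cox_ge2[OF assms Mi] .
  define J :: "('i list \<Rightarrow> 'k) set" where "J = nc_ideal (nc_rels M)"
  define K where "K = tens_ker J"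
  have Jv: "\<And>f n. f \<in> J \<Longrightarrow> n < m \<Longrightarrow> f (replicate n i) = 0"
    unfolding J_def using J_van[OF assms Mi] by blast
  have Kv: "\<And>X p q. X \<in> K \<Longrightarrow> p < m \<Longrightarrow> q < m \<Longrightarrow> X (replicate p i, replicate q i) = 0"
    unfolding K_def J_def using K_van[OF assms Mi] by blast
  have D2: "\<And>x. x \<in> ncpoly \<Longrightarrow> D x \<in> ncpoly2"
    and Dwd: "\<And>x y. x \<in> ncpoly \<Longrightarrow> y \<in> ncpoly \<Longrightarrow> x - y \<in> J \<Longrightarrow> D x - D y \<in> K"
    and Dadd: "\<And>x y. x \<in> ncpoly \<Longrightarrow> y \<in> ncpoly \<Longrightarrow> D (x + y) - (D x + D y) \<in> K"
    and Dmul: "\<And>x y. x \<in> ncpoly \<Longrightarrow> y \<in> ncpoly \<Longrightarrow> D (ncmul x y) - tmul (D x) (D y) \<in> K"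
    and Done: "D ncone - tone \<in> K"
    using hD unfolding nc_coprod_hom_def Let_def J_def K_def by auto
  have emon: "\<And>w. e (ncmon w) = (if w = [] then 1 else 0)" using e_mon[OF assms he] .
  define Z where "Z p q = D (ncmon [i]) (replicate p i, replicate q i)" for p q
  define P where "P n p q = D (ncmon (replicate n i)) (replicate p i, replicate q i)" for n p q
  have repi: "(replicate p i = [i]) = (p = 1)" for p by (cases p) auto
  have Z0: "Z p 0 = (if p = 1 then 1 else 0)" if p: "p < m" for p
  proof -
    have "id_eps e (D (ncmon [i])) - ncmon [i] \<in> J"
      using hl ncmon_poly unfolding nc_counit_law_def J_def by blast
    from Jv[OF this p] have "id_eps e (D (ncmon [i])) (replicate p i) = ncmon [i] (replicate p i)" by simp
    moreover have "id_eps e (D (ncmon [i])) (replicate p i) = Z p 0"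
      using id_eps_simp[OF D2[OF ncmon_poly] emon] by (simp add: Z_def)
    ultimately show ?thesis by (auto simp: ncmon_def repi)
  qed
  have Z01: "Z 0 1 = 1"
  proof -
    have "eps_id e (D (ncmon [i])) - ncmon [i] \<in> J"
      using hl ncmon_poly unfolding nc_counit_law_def J_def by blast
    from Jv[OF this, of 1] m2 have "eps_id e (D (ncmon [i])) (replicate 1 i) = ncmon [i] (replicate 1 i)" by simp
    moreover have "eps_id e (D (ncmon [i])) (replicate 1 i) = Z 0 1"
      using eps_id_simp[OF D2[OF ncmon_poly] emon] by (simp add: Z_def)
    ultimately show ?thesis by (auto simp: ncmon_def)
  qed
  have Prec: "P (Suc n) p q = (\<Sum>k\<le>p. \<Sum>l\<le>q. Z k l * P n (p-k) (q-l))"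
    if p: "p < m" and q: "q < m" for n p q
  proof -
    have "D (ncmul (ncmon [i]) (ncmon (replicate n i))) - tmul (D (ncmon [i])) (D (ncmon (replicate n i))) \<in> K"
      using Dmul ncmon_poly by blast
    moreover have "ncmul (ncmon [i]) (ncmon (replicate n i)) = ncmon (replicate (Suc n) i)"
      by (simp add: ncmon_mul)
    ultimately have "D (ncmon (replicate (Suc n) i)) - tmul (D (ncmon [i])) (D (ncmon (replicate n i))) \<in> K"
      by metis
    from Kv[OF this p q] show ?thesis by (simp add: P_def Z_def tmul_rep)
  qed
  have P0: "P 0 p q = (if p = 0 \<and> q = 0 then 1 else 0)" if p: "p < m" and q: "q < m" for p q
  proof -
    from Kv[OF Done p q] show ?thesis
      by (simp add: P_def tone_def tens_def ncone_def ncmon_def)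
  qed
  have Pm: "P m (m-1) 1 = 0"
  proof -
    have z: "(0::'i list \<Rightarrow> 'k) \<in> ncpoly" unfolding ncpoly_def by simp
    have "ncmon (replicate m i) \<in> J" unfolding J_def by (rule rep_in_J[of M i m, OF Mi])
    then have a: "D (ncmon (replicate m i)) - D 0 \<in> K" using Dwd[OF ncmon_poly z] by simp
    have b: "D (0 + 0) - (D 0 + D 0) \<in> K" using Dadd[OF z z] .
    have lt: "m - 1 < m" "1 < m" using m2 by auto
    from Kv[OF a lt] Kv[OF b lt] show ?thesis by (simp add: P_def)
  qed
  have ind: "\<forall>p<m. P n p 0 = (if p = n then 1 else 0) \<and>
                   P n p 1 = of_nat n * (if n \<le> p + 1 then Z (p + 1 - n) 1 else 0)" for n
  proof (induction n)
    case 0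
    show ?case using P0 m2 by auto
  next
    case (Suc n)
    show ?case
    proof (intro allI impI conjI)
      fix p assume p: "p < m"
      have h1: "1 < m" using m2 by simp
      have "P (Suc n) p 0 = (\<Sum>k\<le>p. Z k 0 * P n (p-k) 0)" using Prec[OF p] m2 by simp
      also have "\<dots> = (\<Sum>k\<le>p. if k = 1 then (if p - 1 = n then 1 else 0) else 0)"
        using Suc.IH p by (intro sum.cong) (auto simp: Z0)
      also have "\<dots> = (if p = Suc n then 1 else 0)" by (auto simp: sum.delta)
      finally show "P (Suc n) p 0 = (if p = Suc n then 1 else 0)" .
      have "P (Suc n) p 1 = (\<Sum>k\<le>p. Z k 0 * P n (p-k) 1 + Z k 1 * P n (p-k) 0)"
        using Prec[OF p h1] by (simp add: sum_le1)
      also have "\<dots> = (\<Sum>k\<le>p. Z k 0 * P n (p-k) 1) + (\<Sum>k\<le>p. Z k 1 * P n (p-k) 0)"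
        by (rule sum.distrib)
      also have "(\<Sum>k\<le>p. Z k 0 * P n (p-k) 1) = (\<Sum>k\<le>p. if k = 1 then P n (p-1) 1 else 0)"
        using p by (intro sum.cong) (auto simp: Z0)
      also have "\<dots> = (if 1 \<le> p then P n (p-1) 1 else 0)" by (simp add: sum.delta)
      also have "(\<Sum>k\<le>p. Z k 1 * P n (p-k) 0) = (\<Sum>k\<le>p. if k = p - n then (if n \<le> p then Z k 1 else 0) else 0)"
        using Suc.IH p by (intro sum.cong) auto
      also have "\<dots> = (if n \<le> p then Z (p - n) 1 else 0)" by (simp add: sum.delta)
      finally have "P (Suc n) p 1 = (if 1 \<le> p then P n (p-1) 1 else 0) + (if n \<le> p then Z (p - n) 1 else 0)" .
      moreover have "1 \<le> p \<Longrightarrow> P n (p-1) 1 = of_nat n * (if n \<le> p then Z (p - n) 1 else 0)"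
        using Suc.IH p by auto
      ultimately show "P (Suc n) p 1 = of_nat (Suc n) * (if Suc n \<le> p + 1 then Z (p + 1 - Suc n) 1 else 0)"
        by (cases "1 \<le> p") (auto simp: algebra_simps)
    qed
  qed
  have "P m (m-1) 1 = of_nat m" using ind[of m] m2 Z01 by auto
  with Pm have "(of_nat m :: 'k) = 0" by simp
  with m2 show False by simp
qed

end
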